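(* Let $\nu,m_1,m_2,t$ be positive integers with $\nu>m_i\ge t$ for $i\in\{1,2\}$ and $2\nu\ge 2m_1+m_2-t$. Suppose $\mathcal F\subseteq\mathcal P_{m_1}$ and $\mathcal G\subseteq\mathcal P_{m_2}$ are nonempty cross $t$-intersecting families. Then $$|\mathcal F|\le {\tau_t(\mathcal F)\brack t}{m_2-t+1\brack 1}^{\tau_t(\mathcal G)-t}N'(\tau_t(\mathcal G);m_1;2\nu).$$
   Context: Let $q$ be a prime power, $\nu\ge 1$ an integer, and $f$ a non-degenerate alternating bilinear form on $V=\mathbb F_q^{2\nu}$. A subspace $W\le V$ is totally isotropic if $f(x,y)=0$ for all $x,y\in W$. For $0\le m\le \nu$, $\mathcal P_m$ denotes the set of all $m$-dimensional totally isotropic subspaces of $V$. Gaussian binomial coefficient: ${n\brack k}=\prod_{i=0}^{k-1}\frac{q^{n-i}-1}{q^{k-i}-1}$, ${n\brack 0}=1$. For integers $0\le a\le m\le\nu$, $N'(a;m;2\nu)=\prod_{i=1}^{m-a}\frac{q^{2(\nu-m+i)}-1}{q^{i}-1}$; this equals the number of members of $\mathcal P_m$ containing a fixed member of $\mathcal P_a$. Families $\mathcal F\subseteq\mathcal P_{m_1}$, $\mathcal G\subseteq\mathcal P_{m_2}$ are cross $t$-intersecting if $\dim(F\cap G)\ge t$ for all $F\in\mathcal F$, $G\in\mathcal G$. For a family $\mathcal H$ of totally isotropic subspaces, a $t$-cover of $\mathcal H$ is a totally isotropic subspace $X$ with $\dim(X\cap H)\ge t$ for all $H\in\mathcal H$,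 and $\tau_t(\mathcal H)$ is the minimum dimension of a $t$-cover of $\mathcal H$. *)

theory Defs
  imports "HOL-Analysis.Analysis"
begin

text \<open>V = F_q^(2 nu) is modelled as the type 'a^'n with 'a a finite field (q = CARD('a))
 and CARD('n) = 2 nu. Subspaces and dimensions are those of the library
 interpretation vec (vector space over 'a with scalar multiplication (*s)).\<close>

definition alt_bilinear :: "('a::field^'n \<Rightarrow> 'a^'n \<Rightarrow> 'a) \<Rightarrow> bool" where
  "alt_bilinear f \<longleftrightarrow>
     (\<forall>x. Vector_Spaces.linear (*s) (*) (\<lambda>y. f x y)) \<and>
     (\<forall>y. Vector_Spaces.linear (*s) (*) (\<lambda>x. f x y)) \<and>
     (\<forall>x. f x x = 0)"

definition nondegenerate :: "('a::field^'n \<Rightarrow> 'a^'n \<Rightarrow> 'a) \<Rightarrow> bool" where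
  "nondegenerate f \<longleftrightarrow> (\<forall>x. (\<forall>y. f x y = 0) \<longrightarrow> x = 0)"

definition tot_iso :: "('a::field^'n \<Rightarrow> 'a^'n \<Rightarrow> 'a) \<Rightarrow> ('a^'n) set \<Rightarrow> bool" where
  "tot_iso f W \<longleftrightarrow> vec.subspace W \<and> (\<forall>x\<in>W. \<forall>y\<in>W. f x y = 0)"

text \<open>P_m: the m-dimensional totally isotropic subspaces.\<close>
definition Pm :: "('a::field^'n \<Rightarrow> 'a^'n \<Rightarrow> 'a) \<Rightarrow> nat \<Rightarrow> ('a^'n) set set" where
  "Pm f m = {W. tot_iso f W \<and> vec.dim W = m}"

definition cross_t_intersecting :: "('a::field^'n) set set \<Rightarrow> ('a^'n) set set \<Rightarrow> nat \<Rightarrow> bool" where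
  "cross_t_intersecting F G t \<longleftrightarrow> (\<forall>A\<in>F. \<forall>B\<in>G. vec.dim (A \<inter> B) \<ge> t)"

definition t_cover :: "('a::field^'n \<Rightarrow> 'a^'n \<Rightarrow> 'a) \<Rightarrow> nat \<Rightarrow> ('a^'n) set set \<Rightarrow> ('a^'n) set \<Rightarrow> bool" where
  "t_cover f t H X \<longleftrightarrow> tot_iso f X \<and> (\<forall>A\<in>H. vec.dim (X \<inter> A) \<ge> t)"

definition tau :: "('a::field^'n \<Rightarrow> 'a^'n \<Rightarrow> 'a) \<Rightarrow> nat \<Rightarrow> ('a^'n) set set \<Rightarrow> nat" where
  "tau f t H = (LEAST d. \<exists>X. t_cover f t H X \<and> vec.dim X = d)"

text \<open>Gaussian binomial coefficient [n brack k]_q.\<close>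
definition gauss_binom :: "nat \<Rightarrow> nat \<Rightarrow> nat \<Rightarrow> real" where
  "gauss_binom q n k = (\<Prod>i<k. (real q ^ (n - i) - 1) / (real q ^ (k - i) - 1))"

text \<open>N'(a; m; 2 nu).\<close>
definition Nprime :: "nat \<Rightarrow> nat \<Rightarrow> nat \<Rightarrow> nat \<Rightarrow> real" where
  "Nprime q a m \<nu> = (\<Prod>i=1..m - a. (real q ^ (2 * (\<nu> - m + i)) - 1) / (real q ^ i - 1))"

end

theory Submission
  imports Defs
begin

section \<open>Bilinear basics\<close>

lemma bil:
  fixes f :: "'a::field^'n \<Rightarrow> 'a^'n \<Rightarrow> 'a"
  assumes "alt_bilinear f"
  shows "f (x + y) z = f x z + f y z" "f z (x + y) = f z x + f z y"
    "f (c *s x) z = c * f x z" "f z (c *s x) = c * f z x" "f x x = 0"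
    "f 0 z = 0" "f z 0 = 0"
proof -
  have l1: "\<And>x y z. f (x + y) z = f x z + f y z" and l2: "\<And>x y z. f z (x + y) = f z x + f z y"
   and l3: "\<And>c x z. f (c *s x) z = c * f x z" and l4: "\<And>c x z. f z (c *s x) = c * f z x"
   and l5: "\<And>x. f x x = 0"
    using assms unfolding alt_bilinear_def Vector_Spaces.linear_iff by auto
  show "f (x + y) z = f x z + f y z" "f z (x + y) = f z x + f z y"
    "f (c *s x) z = c * f x z" "f z (c *s x) = c * f z x" "f x x = 0" using l1 l2 l3 l4 l5 by auto
  show "f 0 z = 0" by (metis l3 mult_zero_left vec.scale_zero_left)
  show "f z 0 = 0" by (metis l4 mult_zero_left vec.scale_zero_left)
qed

lemma bil_skew:
  fixes f :: "'a::field^'n \<Rightarrow> 'a^'n \<Rightarrow> 'a"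
  assumes "alt_bilinear f"
  shows "f x y = - f y x"
proof -
  have "0 = f (x + y) (x + y)" using bil(5)[OF assms] by simp
  also have "\<dots> = f x x + f x y + f y x + f y y" by (simp only: bil(1,2)[OF assms] add_ac)
  finally have "0 = f x x + f x y + f y x + f y y" .
  then have "f x y + f y x = 0" using bil(5)[OF assms, of x] bil(5)[OF assms, of y]
    by (metis add.left_neutral add.right_neutral add.assoc)
  then show ?thesis by (simp add: eq_neg_iff_add_eq_0)
qed

definition perp :: "('a::field^'n \<Rightarrow> 'a^'n \<Rightarrow> 'a) \<Rightarrow> ('a^'n) set \<Rightarrow> ('a^'n) set" where
  "perp f U = {x. \<forall>u\<in>U. f u x = 0}"

lemma subspace_kerL:
  fixes f :: "'a::field^'n \<Rightarrow> 'a^'n \<Rightarrow> 'a"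
  assumes "alt_bilinear f"
  shows "vec.subspace {u. f u x = 0}"
  unfolding vec.subspace_def by (auto simp: bil[OF assms])

lemma subspace_kerR:
  fixes f :: "'a::field^'n \<Rightarrow> 'a^'n \<Rightarrow> 'a"
  assumes "alt_bilinear f"
  shows "vec.subspace {x. f u x = 0}"
  unfolding vec.subspace_def by (auto simp: bil[OF assms])

lemma subspace_perp:
  fixes f :: "'a::field^'n \<Rightarrow> 'a^'n \<Rightarrow> 'a"
  assumes "alt_bilinear f"
  shows "vec.subspace (perp f U)"
  unfolding vec.subspace_def perp_def by (auto simp: bil[OF assms])

lemma perp_span:
  fixes f :: "'a::field^'n \<Rightarrow> 'a^'n \<Rightarrow> 'a"
  assumes "alt_bilinear f"
  shows "perp f (vec.span U) = perp f U"
proof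
  show "perp f (vec.span U) \<subseteq> perp f U" unfolding perp_def using vec.span_base by blast
  show "perp f U \<subseteq> perp f (vec.span U)"
  proof
    fix x assume "x \<in> perp f U"
    then have "U \<subseteq> {u. f u x = 0}" unfolding perp_def by auto
    then have "vec.span U \<subseteq> {u. f u x = 0}"
      using vec.span_minimal subspace_kerL[OF assms] by blast
    then show "x \<in> perp f (vec.span U)" unfolding perp_def by auto
  qed
qed

lemma iso_span:
  fixes f :: "'a::field^'n \<Rightarrow> 'a^'n \<Rightarrow> 'a"
  assumes "alt_bilinear f" "\<forall>a\<in>A. \<forall>b\<in>A. f a b = 0"
  shows "\<forall>a\<in>vec.span A. \<forall>b\<in>vec.span A. f a b = 0"
proof -
  have "A \<subseteq> perp f A" using assms(2) unfolding perp_def by auto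
  then have "vec.span A \<subseteq> perp f A" using vec.span_minimal subspace_perp[OF assms(1)] by blast
  then have "vec.span A \<subseteq> perp f (vec.span A)" using perp_span[OF assms(1)] by simp
  then show ?thesis unfolding perp_def by auto
qed

section \<open>Cardinality of subspaces\<close>

lemma card_span_indep:
  fixes B :: "('a::{finite,field}^'n) set"
  assumes "vec.independent B"
  shows "card (vec.span B) = CARD('a) ^ card B"
proof -
  have "finite B" by simp
  then show ?thesis using assms
  proof (induction B rule: finite_induct)
    case empty then show ?case by simp
  next
    case (insert b B)
    have indB: "vec.independent B" and bn: "b \<notin> vec.span B"
      using insert.prems insert.hyps vec.independent_insert by metis+
    have eq: "vec.span (insert b B) = (\<lambda>(c,x). x + c *s b) ` (UNIV \<times> vec.span B)"
    proof
      show "vec.span (insert b B) \<subseteq> (\<lambda>(c,x). x + c *s b) ` (UNIV \<times> vec.span B)"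
      proof
        fix x assume "x \<in> vec.span (insert b B)"
        then have "x \<in> {x. \<exists>k. x - k *s b \<in> vec.span B}" by (simp only: vec.span_insert)
        then obtain k where "x - k *s b \<in> vec.span B" by blast
        then show "x \<in> (\<lambda>(c,x). x + c *s b) ` (UNIV \<times> vec.span B)"
          by (intro image_eqI[where x="(k, x - k *s b)"]) auto
      qed
      show "(\<lambda>(c,x). x + c *s b) ` (UNIV \<times> vec.span B) \<subseteq> vec.span (insert b B)"
      proof clarify
        fix c x assume "x \<in> vec.span B"
        then have "(x + c *s b) - c *s b \<in> vec.span B" by simp
        then show "x + c *s b \<in> vec.span (insert b B)" unfolding vec.span_insert by blast
      qed
    qed
    have inj: "inj_on (\<lambda>(c,x). x + c *s b) (UNIV \<times> vec.span B)"
    proof (rule inj_onI, clarify)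
      fix c x c' x' assume x: "x \<in> vec.span B" and x': "x' \<in> vec.span B"
        and e: "x + c *s b = x' + c' *s b"
      show "c = c' \<and> x = x'"
      proof (cases "c = c'")
        case True then show ?thesis using e by simp
      next
        case False
        have "(c - c') *s b = (x + c *s b) - (x + c' *s b)" by (simp add: vec.scale_left_diff_distrib)
        also have "\<dots> = (x' + c' *s b) - (x + c' *s b)" by (simp only: e)
        also have "\<dots> = x' - x" by simp
        finally have eqb: "(c - c') *s b = x' - x" .
        have "inverse (c - c') * (c - c') = 1" using False by simp
        then have "b = inverse (c - c') *s ((c - c') *s b)" by (simp only: vec.scale_scale vec.scale_one)
        also have "\<dots> = inverse (c - c') *s (x' - x)" using eqb by (rule arg_cong)
        finally have "b = inverse (c - c') *s (x' - x)" .
        then have "b \<in> vec.span B" using x x' by (simp add: vec.span_diff vec.span_scale)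
        then show ?thesis using bn by simp
      qed
    qed
    have "card (vec.span (insert b B)) = card ((UNIV::'a set) \<times> vec.span B)"
      unfolding eq using card_image[OF inj] by (simp add: card_cartesian_product)
    also have "\<dots> = CARD('a) * CARD('a) ^ card B" using insert.IH indB by (simp add: card_cartesian_product)
    finally show ?case using insert.hyps by simp
  qed
qed

lemma card_subspace:
  fixes S :: "('a::{finite,field}^'n) set"
  assumes "vec.subspace S"
  shows "card S = CARD('a) ^ vec.dim S"
proof -
  obtain B where "vec.independent B" "vec.span B = S" "card B = vec.dim S"
    using vec.basis_subspace_exists[OF assms] by metis
  then show ?thesis using card_span_indep by metis
qed


fun chains :: "('v list \<Rightarrow> 'v set) \<Rightarrow> nat \<Rightarrow> 'v list set" where
  "chains N 0 = {[]}"
| "chains N (Suc k) = (\<Union>xs\<in>chains N k. (\<lambda>x. x # xs) ` N xs)"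

lemma chains_length: "xs \<in> chains N k \<Longrightarrow> length xs = k"
  by (induction k arbitrary: xs) auto

lemma chains_finite: "finite (chains (N :: 'v::finite list \<Rightarrow> 'v set) k)"
  by (induction k) auto

lemma card_chains_Suc:
  "card (chains (N :: 'v::finite list \<Rightarrow> 'v set) (Suc k)) = (\<Sum>xs\<in>chains N k. card (N xs))"
proof -
  have "card (chains N (Suc k)) = (\<Sum>xs\<in>chains N k. card ((\<lambda>x. x # xs) ` N xs))"
    by (simp only: chains.simps, rule card_UN_disjoint) (auto simp: chains_finite)
  also have "\<dots> = (\<Sum>xs\<in>chains N k. card (N xs))"
    by (rule sum.cong) (auto intro: card_image simp: inj_on_def)
  finally show ?thesis .
qed

lemma card_chains_eq:
  fixes N :: "'v::finite list \<Rightarrow> 'v set"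
  assumes "\<And>j xs. j < k \<Longrightarrow> xs \<in> chains N j \<Longrightarrow> card (N xs) = c j"
  shows "card (chains N k) = (\<Prod>j<k. c j)"
  using assms
proof (induction k)
  case 0 then show ?case by simp
next
  case (Suc k)
  have "card (chains N (Suc k)) = (\<Sum>xs\<in>chains N k. c k)"
    unfolding card_chains_Suc by (rule sum.cong) (auto intro: Suc.prems)
  also have "\<dots> = card (chains N k) * c k" by simp
  also have "\<dots> = (\<Prod>j<k. c j) * c k" using Suc by auto
  finally show ?case by simp
qed

lemma card_chains_le:
  fixes N :: "'v::finite list \<Rightarrow> 'v set"
  assumes "\<And>j xs. j < k \<Longrightarrow> xs \<in> chains N j \<Longrightarrow> real (card (N xs)) \<le> c j"
    and "\<And>j. j < k \<Longrightarrow> 0 \<le> c j"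
  shows "real (card (chains N k)) \<le> (\<Prod>j<k. c j)"
  using assms
proof (induction k)
  case 0 then show ?case by simp
next
  case (Suc k)
  have "real (card (chains N (Suc k))) = (\<Sum>xs\<in>chains N k. real (card (N xs)))"
    unfolding card_chains_Suc by simp
  also have "\<dots> \<le> (\<Sum>xs\<in>chains N k. c k)"
    by (rule sum_mono) (auto intro: Suc.prems)
  also have "\<dots> = real (card (chains N k)) * c k" by simp
  also have "\<dots> \<le> (\<Prod>j<k. c j) * c k"
    using Suc by (intro mult_right_mono) auto
  finally show ?case by simp
qed

lemma chains_mono:
  assumes "\<And>j xs. j < k \<Longrightarrow> xs \<in> chains N1 j \<Longrightarrow> N1 xs \<subseteq> N2 xs"
  shows "chains N1 k \<subseteq> chains N2 k"
  using assms
proof (induction k)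
  case 0 then show ?case by simp
next
  case (Suc k)
  have "chains N1 k \<subseteq> chains N2 k" by (rule Suc.IH) (rule Suc.prems; simp)
  then show ?case using Suc.prems[of k] by auto blast
qed

lemma fiber_bound:
  assumes "finite A" "finite Fam" "\<And>y. y \<in> Fam \<Longrightarrow> c \<le> card {a\<in>A. g a = y}"
  shows "card Fam * c \<le> card A"
proof -
  have "card Fam * c = (\<Sum>y\<in>Fam. c)" by simp
  also have "\<dots> \<le> (\<Sum>y\<in>Fam. card {a\<in>A. g a = y})" by (rule sum_mono) (use assms in auto)
  also have "\<dots> = card (\<Union>y\<in>Fam. {a\<in>A. g a = y})"
    by (rule card_UN_disjoint[symmetric]) (use assms in auto)
  also have "\<dots> \<le> card A" by (rule card_mono) (use assms in auto)
  finally show ?thesis .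
qed

lemma span_chains:
  fixes B Y :: "('a::{finite,field}^'n) set"
  assumes "vec.subspace Y" "B \<subseteq> Y"
  shows "xs \<in> chains (\<lambda>xs. Y - vec.span (B \<union> set xs)) k \<Longrightarrow>
     set xs \<subseteq> Y \<and> vec.dim (B \<union> set xs) = vec.dim B + k"
proof (induction k arbitrary: xs)
  case 0 then show ?case by simp
next
  case (Suc k)
  then obtain x ys where xs: "xs = x # ys" and ys: "ys \<in> chains (\<lambda>xs. Y - vec.span (B \<union> set xs)) k"
    and x: "x \<in> Y" "x \<notin> vec.span (B \<union> set ys)" by auto
  have "B \<union> set xs = insert x (B \<union> set ys)" using xs by auto
  moreover have "vec.dim (insert x (B \<union> set ys)) = vec.dim (B \<union> set ys) + 1"
    using x(2) by (simp add: vec.dim_insert)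
  ultimately show ?case using Suc.IH[OF ys] x xs by auto
qed

lemma card_span_chains:
  fixes B Y :: "('a::{finite,field}^'n) set"
  assumes "vec.subspace Y" "B \<subseteq> Y"
  shows "card (chains (\<lambda>xs. Y - vec.span (B \<union> set xs)) k)
         = (\<Prod>j<k. CARD('a) ^ vec.dim Y - CARD('a) ^ (vec.dim B + j))"
proof (rule card_chains_eq)
  fix j xs assume "j < k" "xs \<in> chains (\<lambda>xs. Y - vec.span (B \<union> set xs)) j"
  then have s: "set xs \<subseteq> Y" and d: "vec.dim (B \<union> set xs) = vec.dim B + j"
    using span_chains[OF assms] by auto
  have sub: "vec.span (B \<union> set xs) \<subseteq> Y" using s assms vec.span_minimal by blast
  have "card (Y - vec.span (B \<union> set xs)) = card Y - card (vec.span (B \<union> set xs))"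
    using sub by (simp add: card_Diff_subset)
  also have "\<dots> = CARD('a) ^ vec.dim Y - CARD('a) ^ (vec.dim B + j)"
  proof -
    have "card (vec.span (B \<union> set xs)) = CARD('a) ^ vec.dim (vec.span (B \<union> set xs))"
      by (rule card_subspace) simp
    also have "\<dots> = CARD('a) ^ (vec.dim B + j)" by (simp only: vec.dim_span d)
    finally show ?thesis using card_subspace[OF assms(1)] by simp
  qed
  finally show "card (Y - vec.span (B \<union> set xs)) = CARD('a) ^ vec.dim Y - CARD('a) ^ (vec.dim B + j)" .
qed

lemma span_chains_eq:
  fixes B Y :: "('a::{finite,field}^'n) set"
  assumes "vec.subspace Y" "B \<subseteq> Y" "vec.dim Y = vec.dim B + k"
    "xs \<in> chains (\<lambda>xs. Y - vec.span (B \<union> set xs)) k"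
  shows "vec.span (B \<union> set xs) = Y"
proof -
  have s: "set xs \<subseteq> Y" and d: "vec.dim (B \<union> set xs) = vec.dim B + k"
    using span_chains[OF assms(1,2) assms(4)] by auto
  have sub: "vec.span (B \<union> set xs) \<subseteq> Y" using s assms vec.span_minimal by blast
  show ?thesis
  proof (rule vec.subspace_dim_equal[OF vec.subspace_span assms(1) sub])
    show "vec.dim Y \<le> vec.dim (vec.span (B \<union> set xs))" by (simp only: vec.dim_span d assms(3))
  qed
qed


lemma card_field_ge2: "2 \<le> CARD('a::{finite,field})"
proof -
  have "card {0::'a, 1} = 2" by simp
  moreover have "card {0::'a, 1} \<le> CARD('a)" by (rule card_mono) auto
  ultimately show ?thesis by simp
qed

lemma pow_diff_real:
  assumes "i \<le> d" "1 \<le> q"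
  shows "real (q ^ d - q ^ i) = real q ^ i * (real q ^ (d - i) - 1)"
proof -
  have "q ^ i \<le> q ^ d" using assms by (simp add: power_increasing)
  then have "real (q ^ d - q ^ i) = real q ^ d - real q ^ i" by (simp add: of_nat_diff)
  also have "real q ^ d = real q ^ i * real q ^ (d - i)" using assms(1) by (simp add: power_add[symmetric])
  finally show ?thesis by (simp add: algebra_simps)
qed

lemma pow_diff_pos:
  assumes "i < d" "2 \<le> q"
  shows "0 < real (q ^ d - q ^ i)"
proof -
  have "q ^ i < q ^ d" using assms by (simp add: power_strict_increasing)
  then show ?thesis by (simp only: of_nat_0_less_iff zero_less_diff)
qed

lemma card_subspaces_le:
  fixes X :: "('a::{finite,field}^'n) set"
  assumes X: "vec.subspace X" and k: "k \<le> vec.dim X"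
  shows "real (card {T. vec.subspace T \<and> T \<subseteq> X \<and> vec.dim T = k}) \<le> gauss_binom CARD('a) (vec.dim X) k"
proof -
  define q where "q = CARD('a)"
  define d where "d = vec.dim X"
  have q2: "2 \<le> q" unfolding q_def by (rule card_field_ge2)
  define Fam where "Fam = {T. vec.subspace T \<and> T \<subseteq> X \<and> vec.dim T = k}"
  define A where "A = chains (\<lambda>xs. X - vec.span ({} \<union> set xs)) k"
  have cardA: "card A = (\<Prod>j<k. q ^ d - q ^ j)"
    unfolding A_def q_def d_def using card_span_chains[OF X, of "{}" k] by simp
  define P2 where "P2 = (\<Prod>j<k. q ^ k - q ^ j)"
  have fib: "card Fam * P2 \<le> card A"
  proof (rule fiber_bound[where g="\<lambda>xs. vec.span ({} \<union> set xs)"])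
    show "finite A" unfolding A_def by (rule chains_finite)
    show "finite Fam" by simp
    fix T assume "T \<in> Fam"
    then have T: "vec.subspace T" "T \<subseteq> X" "vec.dim T = k" unfolding Fam_def by auto
    have sub: "chains (\<lambda>xs. T - vec.span ({} \<union> set xs)) k \<subseteq> {a \<in> A. vec.span ({} \<union> set a) = T}"
    proof
      fix xs assume xs: "xs \<in> chains (\<lambda>xs. T - vec.span ({} \<union> set xs)) k"
      have "xs \<in> A" unfolding A_def
        by (rule subsetD[OF chains_mono xs]) (use T in auto)
      moreover have "vec.span ({} \<union> set xs) = T"
        by (rule span_chains_eq[OF T(1) _ _ xs]) (use T in auto)
      ultimately show "xs \<in> {a \<in> A. vec.span ({} \<union> set a) = T}" by simp
    qed
    have "card (chains (\<lambda>xs. T - vec.span ({} \<union> set xs)) k) = P2"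
      unfolding P2_def q_def using card_span_chains[OF T(1), of "{}" k] T(3) by simp
    show "P2 \<le> card {a \<in> A. vec.span ({} \<union> set a) = T}"
    proof -
      have "finite {a \<in> A. vec.span ({} \<union> set a) = T}" using \<open>finite A\<close> by simp
      then show ?thesis using card_mono[OF _ sub] \<open>card (chains (\<lambda>xs. T - vec.span ({} \<union> set xs)) k) = P2\<close> by simp
    qed
  qed
  have P2pos: "0 < real P2"
    unfolding P2_def of_nat_prod by (rule prod_pos) (use pow_diff_pos q2 in auto)
  have "real (card Fam) * real P2 \<le> real (card A)" using fib by (metis of_nat_le_iff of_nat_mult)
  then have "real (card Fam) \<le> real (card A) / real P2" using P2pos by (simp add: pos_le_divide_eq)
  also have "\<dots> = (\<Prod>j<k. real (q ^ d - q ^ j) / real (q ^ k - q ^ j))"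
    unfolding cardA P2_def by (simp add: prod_dividef)
  also have "\<dots> = (\<Prod>j<k. (real q ^ (d - j) - 1) / (real q ^ (k - j) - 1))"
  proof (rule prod.cong[OF refl])
    fix j assume "j \<in> {..<k}"
    then have j: "j \<le> d" "j \<le> k" using k d_def by auto
    have "real q ^ j > 0" using q2 by simp
    then show "real (q ^ d - q ^ j) / real (q ^ k - q ^ j) = (real q ^ (d - j) - 1) / (real q ^ (k - j) - 1)"
      using pow_diff_real[OF j(1)] pow_diff_real[OF j(2)] q2 by simp
  qed
  also have "\<dots> = gauss_binom CARD('a) (vec.dim X) k" unfolding gauss_binom_def q_def d_def ..
  finally show ?thesis unfolding Fam_def .
qed


lemma dim_hyperplane:
  fixes S :: "('a::field^'n) set" and \<phi> :: "'a^'n \<Rightarrow> 'a"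
  assumes S: "vec.subspace S"
    and add: "\<And>x y. \<phi> (x + y) = \<phi> x + \<phi> y" and sc: "\<And>c x. \<phi> (c *s x) = c * \<phi> x"
  shows "vec.dim S \<le> vec.dim (S \<inter> {x. \<phi> x = 0}) + 1"
proof (cases "S \<subseteq> {x. \<phi> x = 0}")
  case True
  then have "S \<inter> {x. \<phi> x = 0} = S" by blast
  then show ?thesis by simp
next
  case False
  then obtain a where a: "a \<in> S" "\<phi> a \<noteq> 0" by blast
  let ?K = "S \<inter> {x. \<phi> x = 0}"
  have "S \<subseteq> vec.span (insert a ?K)"
  proof
    fix x assume x: "x \<in> S"
    let ?k = "\<phi> x / \<phi> a"
    have "\<phi> (x - ?k *s a) = \<phi> x - ?k * \<phi> a"
      using add[of "x - ?k *s a" "?k *s a"] sc[of ?k a] by (simp add: algebra_simps)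
    also have "\<dots> = 0" using a by simp
    finally have "x - ?k *s a \<in> ?K" using x a S by (simp add: vec.subspace_diff vec.subspace_scale)
    then have "x - ?k *s a \<in> vec.span ?K" by (rule vec.span_base)
    then have "x \<in> {x. \<exists>k. x - k *s a \<in> vec.span ?K}" by blast
    then show "x \<in> vec.span (insert a ?K)" by (simp only: vec.span_insert)
  qed
  then have "vec.dim S \<le> vec.dim (insert a ?K)" by (rule vec.dim_mono)
  also have "\<dots> \<le> vec.dim ?K + 1" by (simp add: vec.dim_insert)
  finally show ?thesis .
qed

lemma perp_UNIV:
  fixes f :: "'a::field^'n \<Rightarrow> 'a^'n \<Rightarrow> 'a"
  assumes "alt_bilinear f" "nondegenerate f"
  shows "perp f UNIV = {0}"
proof
  show "perp f UNIV \<subseteq> {0}"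
  proof
    fix x assume "x \<in> perp f UNIV"
    then have "\<forall>y. f y x = 0" unfolding perp_def by auto
    then have "\<forall>y. f x y = 0" using bil_skew[OF assms(1)] by (metis neg_equal_0_iff_equal)
    then show "x \<in> {0}" using assms(2) unfolding nondegenerate_def by auto
  qed
  show "{0} \<subseteq> perp f UNIV" unfolding perp_def using bil(7)[OF assms(1)] by auto
qed

lemma dim_le_n: "vec.dim (U::('a::field^'n) set) \<le> CARD('n)"
proof -
  have "vec.dim U \<le> vec.dim (UNIV :: ('a^'n) set)" by (rule vec.dim_subset) simp
  then show ?thesis by (simp only: vec_dim_card)
qed

lemma dim_perp:
  fixes f :: "'a::field^'n \<Rightarrow> 'a^'n \<Rightarrow> 'a"
  assumes bf: "alt_bilinear f" and nd: "nondegenerate f"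
  shows "vec.dim (perp f U) + vec.dim U \<le> CARD('n)"
proof (induction "CARD('n) - vec.dim U" arbitrary: U rule: less_induct)
  case less
  have dimU: "vec.dim U \<le> CARD('n)" by (rule dim_le_n)
  show ?case
  proof (cases "vec.span U = UNIV")
    case True
    have "perp f U = {0}" using perp_span[OF bf, of U] True perp_UNIV[OF bf nd] by simp
    then show ?thesis using dimU by simp
  next
    case False
    then obtain v where v: "v \<notin> vec.span U" by blast
    have d1: "vec.dim (insert v U) = vec.dim U + 1" using v by (simp add: vec.dim_insert)
    have "vec.dim (insert v U) \<le> CARD('n)" by (rule dim_le_n)
    then have "CARD('n) - vec.dim (insert v U) < CARD('n) - vec.dim U" using d1 by simp
    then have IH: "vec.dim (perp f (insert v U)) + vec.dim (insert v U) \<le> CARD('n)" by (rule less.hyps)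
    have pe: "perp f (insert v U) = perp f U \<inter> {x. f v x = 0}" unfolding perp_def by auto
    have "vec.dim (perp f U) \<le> vec.dim (perp f U \<inter> {x. f v x = 0}) + 1"
      by (rule dim_hyperplane[OF subspace_perp[OF bf]]) (simp_all add: bil[OF bf])
    then show ?thesis using IH pe d1 by simp
  qed
qed


lemma prod_rev_1k:
  fixes h :: "nat \<Rightarrow> real"
  shows "(\<Prod>j<k. h (k - j)) = (\<Prod>i=1..k. h i)"
  by (rule prod.reindex_bij_witness[of _ "\<lambda>i. k - i" "\<lambda>j. k - j"]) auto

lemma card_iso_ext_le:
  fixes f :: "'a::{finite,field}^'n \<Rightarrow> 'a^'n \<Rightarrow> 'a" and T :: "('a^'n) set"
  assumes bf: "alt_bilinear f" and nd: "nondegenerate f"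
    and dimn: "CARD('n) = 2 * \<nu>"
    and T: "tot_iso f T" and dT: "vec.dim T = s" and sm: "s \<le> m" and mn: "m \<le> \<nu>"
  shows "real (card {F\<in>Pm f m. T \<subseteq> F}) \<le> Nprime CARD('a) s m \<nu>"
proof -
  define q where "q = CARD('a)"
  define n where "n = CARD('n)"
  define k where "k = m - s"
  have q2: "2 \<le> q" unfolding q_def by (rule card_field_ge2)
  have Tsub: "vec.subspace T" and Tiso: "\<forall>a\<in>T. \<forall>b\<in>T. f a b = 0" using T unfolding tot_iso_def by auto
  define NA where "NA = (\<lambda>xs. perp f (vec.span (T \<union> set xs)) - vec.span (T \<union> set xs))"
  have inv: "(\<forall>a\<in>T \<union> set xs. \<forall>b\<in>T \<union> set xs. f a b = 0) \<and> vec.dim (T \<union> set xs) = s + j"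
    if "xs \<in> chains NA j" for xs j
    using that
  proof (induction j arbitrary: xs)
    case 0 then show ?case using Tiso dT by simp
  next
    case (Suc j)
    then obtain x ys where xs: "xs = x # ys" and ys: "ys \<in> chains NA j"
      and x: "x \<in> perp f (vec.span (T \<union> set ys))" "x \<notin> vec.span (T \<union> set ys)"
      unfolding NA_def by auto
    let ?W = "T \<union> set ys"
    have IH: "\<forall>a\<in>?W. \<forall>b\<in>?W. f a b = 0" "vec.dim ?W = s + j" using Suc.IH[OF ys] by auto
    have xW: "\<forall>a\<in>?W. f a x = 0" using x(1) vec.span_base unfolding perp_def by blast
    have Wx: "\<forall>a\<in>?W. f x a = 0" using xW bil_skew[OF bf] by (metis neg_equal_0_iff_equal)
    have eq: "T \<union> set xs = insert x ?W" using xs by auto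
    have "\<forall>a\<in>insert x ?W. \<forall>b\<in>insert x ?W. f a b = 0"
      using IH(1) xW Wx bil(5)[OF bf] by blast
    moreover have "vec.dim (insert x ?W) = s + Suc j" using x(2) IH(2) by (simp add: vec.dim_insert)
    ultimately show ?case unfolding eq by simp
  qed
  have bound: "real (card (NA xs)) \<le> real q ^ (n - (s + j)) - real q ^ (s + j)"
    if "xs \<in> chains NA j" for xs j
  proof -
    let ?W = "vec.span (T \<union> set xs)"
    have iv: "\<forall>a\<in>T \<union> set xs. \<forall>b\<in>T \<union> set xs. f a b = 0" "vec.dim (T \<union> set xs) = s + j"
      using inv[OF that] by auto
    have isoW: "\<forall>a\<in>?W. \<forall>b\<in>?W. f a b = 0" by (rule iso_span[OF bf iv(1)])
    have Wp: "?W \<subseteq> perp f ?W" using isoW unfolding perp_def by auto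
    have dW: "vec.dim ?W = s + j" using iv(2) by (simp only: vec.dim_span)
    have cW: "card ?W = q ^ (s + j)" unfolding q_def using card_subspace[of ?W] dW by simp
    have dP: "vec.dim (perp f ?W) \<le> n - (s + j)" using dim_perp[OF bf nd, of ?W] dW unfolding n_def by simp
    have cP: "card (perp f ?W) \<le> q ^ (n - (s + j))"
      unfolding q_def using card_subspace[OF subspace_perp[OF bf]] dP q2 q_def
      by (simp add: power_increasing)
    have "card (NA xs) = card (perp f ?W) - card ?W" unfolding NA_def by (rule card_Diff_subset) (auto simp: Wp)
    moreover have "card ?W \<le> card (perp f ?W)" by (rule card_mono[OF _ Wp]) simp
    ultimately have "real (card (NA xs)) = real (card (perp f ?W)) - real (card ?W)" by simp
    also have "\<dots> \<le> real q ^ (n - (s + j)) - real q ^ (s + j)"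
    proof -
      have "real (card (perp f ?W)) \<le> real (q ^ (n - (s + j)))" using cP by (simp only: of_nat_le_iff)
      then show ?thesis using cW by simp
    qed
    finally show ?thesis .
  qed
  define P1 where "P1 = (\<Prod>j<k. real q ^ (n - (s + j)) - real q ^ (s + j))"
  have chA: "real (card (chains NA k)) \<le> P1" unfolding P1_def
  proof (rule card_chains_le)
    show "real (card (NA xs)) \<le> real q ^ (n - (s + j)) - real q ^ (s + j)"
      if "j < k" "xs \<in> chains NA j" for j xs using bound that by blast
    show "0 \<le> real q ^ (n - (s + j)) - real q ^ (s + j)" if "j < k" for j
    proof -
      have "s + j \<le> n - (s + j)" using that k_def sm mn dimn n_def by simp
      then show ?thesis using q2 by (simp add: power_increasing)
    qed
  qed
  define P2 where "P2 = (\<Prod>j<k. q ^ m - q ^ (s + j))"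
  define Fam where "Fam = {F\<in>Pm f m. T \<subseteq> F}"
  have fib: "card Fam * P2 \<le> card (chains NA k)"
  proof (rule fiber_bound[where g="\<lambda>xs. vec.span (T \<union> set xs)"])
    show "finite (chains NA k)" by (rule chains_finite)
    show "finite Fam" by simp
    fix F assume "F \<in> Fam"
    then have F: "vec.subspace F" "\<forall>a\<in>F. \<forall>b\<in>F. f a b = 0" "vec.dim F = m" "T \<subseteq> F"
      unfolding Fam_def Pm_def tot_iso_def by auto
    let ?NF = "\<lambda>xs. F - vec.span (T \<union> set xs)"
    have sub: "chains ?NF k \<subseteq> {a \<in> chains NA k. vec.span (T \<union> set a) = F}"
    proof
      fix xs assume xs: "xs \<in> chains ?NF k"
      have "xs \<in> chains NA k"
      proof (rule subsetD[OF chains_mono xs])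
        fix j ys assume "j < k" "ys \<in> chains ?NF j"
        then have "set ys \<subseteq> F" using span_chains[OF F(1) F(4)] by blast
        then have "vec.span (T \<union> set ys) \<subseteq> F" using F(1,4) vec.span_minimal by blast
        then have "F \<subseteq> perp f (vec.span (T \<union> set ys))" using F(2) unfolding perp_def by blast
        then show "?NF ys \<subseteq> NA ys" unfolding NA_def by blast
      qed
      moreover have "vec.span (T \<union> set xs) = F"
        by (rule span_chains_eq[OF F(1) F(4) _ xs]) (simp add: F(3) dT k_def sm)
      ultimately show "xs \<in> {a \<in> chains NA k. vec.span (T \<union> set a) = F}" by simp
    qed
    have "card (chains ?NF k) = P2"
      unfolding P2_def q_def using card_span_chains[OF F(1) F(4), of k] F(3) dT by simp
    moreover have "finite {a \<in> chains NA k. vec.span (T \<union> set a) = F}" by (rule finite_subset[OF _ chains_finite[of NA k]]) auto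
    ultimately show "P2 \<le> card {a \<in> chains NA k. vec.span (T \<union> set a) = F}"
      using card_mono[OF _ sub] by simp
  qed
  have P2pos: "0 < real P2"
    unfolding P2_def of_nat_prod by (rule prod_pos) (use pow_diff_pos q2 k_def in auto)
  have "real (card Fam * P2) \<le> real (card (chains NA k))" using fib by (simp only: of_nat_le_iff)
  then have "real (card Fam) * real P2 \<le> P1" using chA by simp
  then have "real (card Fam) \<le> P1 / real P2" using P2pos by (simp add: pos_le_divide_eq)
  also have "\<dots> = (\<Prod>j<k. (real q ^ (n - (s + j)) - real q ^ (s + j)) / real (q ^ m - q ^ (s + j)))"
    unfolding P1_def P2_def of_nat_prod by (simp add: prod_dividef)
  also have "\<dots> = (\<Prod>j<k. (real q ^ (2 * (\<nu> - m + (k - j))) - 1) / (real q ^ (k - j) - 1))"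
  proof (rule prod.cong[OF refl])
    fix j assume "j \<in> {..<k}"
    then have j: "s + j < m" using k_def by auto
    have e1: "n - (s + j) = (s + j) + 2 * (\<nu> - m + (k - j))" using j k_def mn dimn n_def by simp
    have e2: "m - (s + j) = k - j" using k_def by simp
    have num: "real q ^ (n - (s + j)) - real q ^ (s + j) = real q ^ (s + j) * (real q ^ (2 * (\<nu> - m + (k - j))) - 1)"
      unfolding e1 by (simp add: power_add algebra_simps)
    have den: "real (q ^ m - q ^ (s + j)) = real q ^ (s + j) * (real q ^ (k - j) - 1)"
      using pow_diff_real[of "s + j" m q] j q2 e2 by simp
    have "real q ^ (s + j) \<noteq> 0" using q2 by simp
    show "(real q ^ (n - (s + j)) - real q ^ (s + j)) / real (q ^ m - q ^ (s + j)) =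
          (real q ^ (2 * (\<nu> - m + (k - j))) - 1) / (real q ^ (k - j) - 1)"
      unfolding num den by (rule mult_divide_mult_cancel_left) fact
  qed
  also have "\<dots> = (\<Prod>i=1..k. (real q ^ (2 * (\<nu> - m + i)) - 1) / (real q ^ i - 1))"
    by (rule prod_rev_1k[where h="\<lambda>i. (real q ^ (2 * (\<nu> - m + i)) - 1) / (real q ^ i - 1)"])
  also have "\<dots> = Nprime CARD('a) s m \<nu>" unfolding Nprime_def q_def k_def ..
  finally show ?thesis unfolding Fam_def .
qed


lemma dim_sum_Int':
  fixes S T :: "('a::field^'n) set"
  assumes "vec.subspace S" "vec.subspace T"
  shows "vec.dim (S \<union> T) + vec.dim (S \<inter> T) = vec.dim S + vec.dim T"
proof -
  have "vec.span (S \<union> T) = {x + y |x y. x \<in> S \<and> y \<in> T}"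
  proof -
    have e: "vec.span S = S" "vec.span T = T" using assms by simp_all
    show ?thesis by (subst vec.span_Un, simp only: e)
  qed
  then have "vec.dim (S \<union> T) = vec.dim {x + y |x y. x \<in> S \<and> y \<in> T}"
    using vec.dim_span[of "S \<union> T"] by simp
  then show ?thesis using vec.dim_sums_Int[OF assms] by simp
qed

lemma span_insert_scale:
  fixes v :: "'a::field^'n"
  assumes "c \<noteq> 0"
  shows "vec.span (insert (c *s v) T) = vec.span (insert v T)"
proof
  have "T \<subseteq> vec.span (insert v T)" using vec.span_superset by blast
  moreover have "c *s v \<in> vec.span (insert v T)" by (simp add: vec.span_base vec.span_scale)
  ultimately have "insert (c *s v) T \<subseteq> vec.span (insert v T)" by blast
  then show "vec.span (insert (c *s v) T) \<subseteq> vec.span (insert v T)"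
    using vec.span_minimal vec.subspace_span by blast
  have "v = inverse c *s (c *s v)" using assms by simp
  then have "v \<in> vec.span (insert (c *s v) T)"
    by (metis insertI1 vec.span_base vec.span_scale)
  moreover have "T \<subseteq> vec.span (insert (c *s v) T)" using vec.span_superset by blast
  ultimately have "insert v T \<subseteq> vec.span (insert (c *s v) T)" by blast
  then show "vec.span (insert v T) \<subseteq> vec.span (insert (c *s v) T)"
    using vec.span_minimal vec.subspace_span by blast
qed

lemma lines_le:
  fixes C T :: "('a::{finite,field}^'n) set"
  assumes C: "vec.subspace C"
  shows "real (card ((\<lambda>v. vec.span (insert v T)) ` (C - {0}))) \<le> gauss_binom CARD('a) (vec.dim C) 1"
proof -
  define q where "q = CARD('a)"
  have q2: "2 \<le> q" unfolding q_def by (rule card_field_ge2)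
  define g where "g = (\<lambda>v. vec.span (insert v T))"
  have fib: "card (g ` (C - {0})) * (q - 1) \<le> card (C - {0})"
  proof (rule fiber_bound[where g=g])
    show "finite (C - {0})" by simp
    show "finite (g ` (C - {0}))" by simp
    fix y assume "y \<in> g ` (C - {0})"
    then obtain v where v: "v \<in> C" "v \<noteq> 0" "y = g v" by auto
    have sub: "(\<lambda>c. c *s v) ` (UNIV - {0}) \<subseteq> {a \<in> C - {0}. g a = y}"
      using v C by (auto simp: g_def span_insert_scale vec.subspace_scale)
    have "card ((\<lambda>c. c *s v) ` (UNIV - {0})) = card (UNIV - {0::'a})"
      by (rule card_image) (use v in \<open>auto simp: inj_on_def\<close>)
    also have "\<dots> = q - 1" unfolding q_def by (simp add: card_Diff_singleton)
    finally show "q - 1 \<le> card {a \<in> C - {0}. g a = y}"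
      using card_mono[OF _ sub] by simp
  qed
  have cC: "card (C - {0}) = q ^ vec.dim C - 1"
    using card_subspace[OF C] vec.subspace_0[OF C] unfolding q_def by (simp add: card_Diff_singleton)
  have "real (card (g ` (C - {0}))) * real (q - 1) \<le> real (q ^ vec.dim C - 1)"
  proof -
    have "real (card (g ` (C - {0})) * (q - 1)) \<le> real (q ^ vec.dim C - 1)"
      using fib cC by (simp only: of_nat_le_iff)
    then show ?thesis by simp
  qed
  moreover have "real (q - 1) = real q - 1" using q2 by (simp add: of_nat_diff)
  moreover have "real (q ^ vec.dim C - 1) = real q ^ vec.dim C - 1"
    using q2 by (simp add: of_nat_diff)
  moreover have "real q - 1 > 0" using q2 by simp
  ultimately have "real (card (g ` (C - {0}))) \<le> (real q ^ vec.dim C - 1) / (real q - 1)"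
    by (simp add: pos_le_divide_eq)
  then show ?thesis unfolding gauss_binom_def g_def q_def by simp
qed

lemma exists_complement:
  fixes I G :: "('a::{finite,field}^'n) set"
  assumes I: "vec.subspace I" and G: "vec.subspace G" and IG: "I \<subseteq> G"
    and d: "vec.dim I + k \<le> vec.dim G"
  shows "\<exists>C. vec.subspace C \<and> C \<subseteq> G \<and> vec.dim C = k \<and> C \<inter> I \<subseteq> {0}"
proof -
  define q where "q = CARD('a)"
  have q2: "2 \<le> q" unfolding q_def by (rule card_field_ge2)
  define A where "A = chains (\<lambda>xs. G - vec.span (I \<union> set xs)) k"
  have "card A = (\<Prod>j<k. q ^ vec.dim G - q ^ (vec.dim I + j))"
    unfolding A_def q_def by (rule card_span_chains[OF G IG])
  also have "\<dots> > 0"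
  proof (rule prod_pos)
    fix j assume "j \<in> {..<k}"
    then have "vec.dim I + j < vec.dim G" using d by auto
    then have "q ^ (vec.dim I + j) < q ^ vec.dim G" using q2 by (simp add: power_strict_increasing)
    then show "0 < q ^ vec.dim G - q ^ (vec.dim I + j)" by simp
  qed
  finally have "A \<noteq> {}" by auto
  then obtain xs where xs: "xs \<in> A" by blast
  then have sx: "set xs \<subseteq> G" "vec.dim (I \<union> set xs) = vec.dim I + k"
    using span_chains[OF G IG] unfolding A_def by auto
  have lx: "length xs = k" using xs chains_length unfolding A_def by blast
  define C where "C = vec.span (set xs)"
  have Csub: "vec.subspace C" unfolding C_def by simp
  have CG: "C \<subseteq> G" unfolding C_def using sx(1) G vec.span_minimal by blast
  have dC: "vec.dim C \<le> k"
  proof -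
    have "vec.dim C = vec.dim (set xs)" unfolding C_def by (rule vec.dim_span)
    also have "\<dots> \<le> card (set xs)" by (rule vec.dim_le_card) (auto intro: vec.span_base)
    also have "\<dots> \<le> k" using lx card_length[of xs] by simp
    finally show ?thesis .
  qed
  have "vec.dim (I \<union> set xs) \<le> vec.dim (I \<union> C)"
    by (rule vec.dim_subset) (auto simp: C_def intro: vec.span_base)
  then have "vec.dim I + k + vec.dim (I \<inter> C) \<le> vec.dim I + vec.dim C"
    using dim_sum_Int'[OF I Csub] sx(2) by linarith
  then have "vec.dim (I \<inter> C) = 0" "vec.dim C = k" using dC by linarith+
  moreover have "I \<inter> C \<subseteq> {0}" using \<open>vec.dim (I \<inter> C) = 0\<close> by (simp only: vec.dim_eq_0)
  ultimately show ?thesis using Csub CG by (intro exI[of _ C]) auto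
qed


theorem lemma2p3:
  fixes f :: "'a::{finite,field}^'n \<Rightarrow> 'a^'n \<Rightarrow> 'a"
    and \<nu> m1 m2 t :: nat
    and F G :: "('a^'n) set set"
  assumes dim: "CARD('n) = 2 * \<nu>"
    and form: "alt_bilinear f" "nondegenerate f"
    and pos: "0 < t"
    and m1: "t \<le> m1" "m1 < \<nu>"
    and m2: "t \<le> m2" "m2 < \<nu>"
    and big: "2 * \<nu> \<ge> 2 * m1 + m2 - t"
    and FP: "F \<subseteq> Pm f m1" and GP: "G \<subseteq> Pm f m2"
    and ne: "F \<noteq> {}" "G \<noteq> {}"
    and cross: "cross_t_intersecting F G t"
  shows "real (card F) \<le>
           gauss_binom CARD('a) (tau f t F) t
         * gauss_binom CARD('a) (m2 - t + 1) 1 ^ (tau f t G - t)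
         * Nprime CARD('a) (tau f t G) m1 \<nu>"
proof -
  define q where "q = CARD('a)"
  have q2: "2 \<le> q" unfolding q_def by (rule card_field_ge2)
  define s where "s = tau f t G"
  define tF where "tF = tau f t F"
  define L where "L = gauss_binom q (m2 - t + 1) 1"
  have bf: "alt_bilinear f" and nd: "nondegenerate f" using form by auto
  have Fprop: "tot_iso f A \<and> vec.dim A = m1" if "A \<in> F" for A using that FP unfolding Pm_def by auto
  have Gprop: "tot_iso f B \<and> vec.dim B = m2" if "B \<in> G" for B using that GP unfolding Pm_def by auto
  have crossI: "t \<le> vec.dim (A \<inter> B)" if "A \<in> F" "B \<in> G" for A B
    using cross that unfolding cross_t_intersecting_def by auto
  obtain F0 where F0: "F0 \<in> F" using ne by blast
  obtain G0 where G0: "G0 \<in> G" using ne by blast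
  have covG: "t_cover f t G F0" unfolding t_cover_def using Fprop[OF F0] crossI[OF F0] by auto
  have covF: "t_cover f t F G0" unfolding t_cover_def using Gprop[OF G0] crossI[OF _ G0]
    by (auto simp: Int_commute)
  have sLe: "s \<le> m1" unfolding s_def tau_def
    by (rule Least_le) (use covG Fprop[OF F0] in blast)
  have "\<exists>X. t_cover f t G X \<and> vec.dim X = (LEAST d. \<exists>X. t_cover f t G X \<and> vec.dim X = d)"
    by (rule LeastI_ex) (use covG in blast)
  then obtain Y where Y: "t_cover f t G Y" "vec.dim Y = s" unfolding s_def tau_def by blast
  have "\<exists>X. t_cover f t F X \<and> vec.dim X = (LEAST d. \<exists>X. t_cover f t F X \<and> vec.dim X = d)"
    by (rule LeastI_ex) (use covF in blast)
  then obtain X where X: "t_cover f t F X" "vec.dim X = tF" unfolding tF_def tau_def by blast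
  have Xsub: "vec.subspace X" using X(1) unfolding t_cover_def tot_iso_def by auto
  have st: "t \<le> s"
  proof -
    have "t \<le> vec.dim (Y \<inter> G0)" using Y(1) G0 unfolding t_cover_def by auto
    also have "\<dots> \<le> vec.dim Y" by (rule vec.dim_subset) auto
    finally show ?thesis using Y(2) by simp
  qed
  have tFt: "t \<le> tF"
  proof -
    have "t \<le> vec.dim (X \<inter> F0)" using X(1) F0 unfolding t_cover_def by auto
    also have "\<dots> \<le> vec.dim X" by (rule vec.dim_subset) auto
    finally show ?thesis using X(2) by simp
  qed
  have notcov: "\<not> t_cover f t G T" if "vec.dim T < s" for T
  proof
    assume "t_cover f t G T"
    then have "s \<le> vec.dim T" unfolding s_def tau_def by (intro Least_le) blast
    then show False using that by simp
  qed
  define good where "good T C \<longleftrightarrow> vec.subspace C \<and> vec.dim C = m2 - t + 1 \<and> C \<inter> T \<subseteq> {0}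
      \<and> (\<exists>G'\<in>G. C \<subseteq> G')" for T C
  define Csel where "Csel T = (if \<exists>C. good T C then SOME C. good T C else {0})" for T
  have Csel_cases: "good T (Csel T) \<or> Csel T = {0}" for T
    unfolding Csel_def using someI_ex[of "good T"] by auto
  have good_ex: "good T (Csel T)" if T: "tot_iso f T" "vec.dim T < s" for T
  proof -
    obtain G' where G': "G' \<in> G" "\<not> t \<le> vec.dim (T \<inter> G')"
      using notcov[OF T(2)] T(1) unfolding t_cover_def by auto
    have Tsub: "vec.subspace T" using T(1) unfolding tot_iso_def by auto
    have G'sub: "vec.subspace G'" "vec.dim G' = m2" using Gprop[OF G'(1)] unfolding tot_iso_def by auto
    have Isub: "vec.subspace (T \<inter> G')" using Tsub G'sub(1) by (rule vec.subspace_inter)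
    have dd: "vec.dim (T \<inter> G') + (m2 - t + 1) \<le> vec.dim G'" using G'(2) G'sub(2) m2 by linarith
    have "\<exists>C. vec.subspace C \<and> C \<subseteq> G' \<and> vec.dim C = m2 - t + 1 \<and> C \<inter> (T \<inter> G') \<subseteq> {0}"
      by (rule exists_complement[OF Isub G'sub(1) Int_lower2 dd])
    then obtain C where C: "vec.subspace C" "C \<subseteq> G'" "vec.dim C = m2 - t + 1" "C \<inter> (T \<inter> G') \<subseteq> {0}"
      by blast
    have "C \<inter> T \<subseteq> {0}" using C(2,4) by blast
    then have "good T C" unfolding good_def using C(1-3) G'(1) by blast
    then have "\<exists>C. good T C" by blast
    then show ?thesis unfolding Csel_def using someI_ex[of "good T"] by auto
  qed
  define step where "step S = (\<Union>T\<in>S. (\<lambda>v. vec.span (insert v T)) ` (Csel T - {0}))" for S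
  define T0 where "T0 = {T. vec.subspace T \<and> T \<subseteq> X \<and> vec.dim T = t}"
  define Tf where "Tf i = (step ^^ i) T0" for i
  have Tf0: "Tf 0 = T0" and TfS: "Tf (Suc i) = step (Tf i)" for i unfolding Tf_def by simp_all
  (* claim (a) *)
  have claimA: "\<exists>T\<in>Tf i. T \<subseteq> A \<and> vec.subspace T \<and> vec.dim T = t + i"
    if A: "A \<in> F" and i: "i \<le> s - t" for A i
    using i
  proof (induction i)
    case 0
    have Asub: "vec.subspace A" using Fprop[OF A] unfolding tot_iso_def by auto
    have "t \<le> vec.dim (X \<inter> A)" using X(1) A unfolding t_cover_def by auto
    then obtain T where T: "vec.subspace T" "T \<subseteq> vec.span (X \<inter> A)" "vec.dim T = t"
      by (rule vec.choose_subspace_of_subspace)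
    have sp: "vec.span (X \<inter> A) = X \<inter> A" using vec.subspace_inter[OF Xsub Asub] by simp
    have "T \<subseteq> X \<inter> A" using T(2) unfolding sp .
    then have "T \<in> Tf 0" "T \<subseteq> A" using T unfolding Tf0 T0_def by auto
    then show ?case using T by auto
  next
    case (Suc i)
    then obtain T where T: "T \<in> Tf i" "T \<subseteq> A" "vec.subspace T" "vec.dim T = t + i" by auto
    have Aiso: "tot_iso f A" "vec.dim A = m1" using Fprop[OF A] by auto
    have Asub: "vec.subspace A" using Aiso unfolding tot_iso_def by auto
    have Tiso: "tot_iso f T" using T(2,3) Aiso(1) unfolding tot_iso_def by blast
    have "vec.dim T < s" using T(4) Suc.prems by linarith
    then have gd: "good T (Csel T)" using good_ex Tiso by blast
    define C where "C = Csel T"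
    have C: "vec.subspace C" "vec.dim C = m2 - t + 1" "C \<inter> T \<subseteq> {0}" using gd unfolding good_def C_def by auto
    obtain G' where G': "G' \<in> G" "C \<subseteq> G'" using gd unfolding good_def C_def by auto
    have G'sub: "vec.subspace G'" "vec.dim G' = m2" using Gprop[OF G'(1)] unfolding tot_iso_def by auto
    have AGsub: "vec.subspace (A \<inter> G')" using Asub G'sub(1) by (rule vec.subspace_inter)
    have e: "vec.dim ((A \<inter> G') \<union> C) + vec.dim ((A \<inter> G') \<inter> C) = vec.dim (A \<inter> G') + vec.dim C"
      by (rule dim_sum_Int'[OF AGsub C(1)])
    have "vec.dim ((A \<inter> G') \<union> C) \<le> vec.dim G'" by (rule vec.dim_subset) (use G'(2) in auto)
    moreover have "t \<le> vec.dim (A \<inter> G')" using crossI[OF A G'(1)] .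
    ultimately have "vec.dim ((A \<inter> G') \<inter> C) \<noteq> 0" using e C(2) G'sub(2) m2 by linarith
    then have "\<not> ((A \<inter> G') \<inter> C \<subseteq> {0})" by (simp only: vec.dim_eq_0) simp
    then obtain v where v: "v \<in> A" "v \<in> C" "v \<noteq> 0" by blast
    have spT: "vec.span T = T" using T(3) by simp
    have vT: "v \<notin> vec.span T" unfolding spT using v C(3) by blast
    define T' where "T' = vec.span (insert v T)"
    have "T' \<in> Tf (Suc i)" unfolding TfS step_def T'_def using T(1) v(2,3) unfolding C_def by blast
    moreover have "T' \<subseteq> A" unfolding T'_def using v(1) T(2) Asub vec.span_minimal by blast
    moreover have "vec.dim T' = t + Suc i" unfolding T'_def using vT T(4)
      by (simp add: vec.dim_span vec.dim_insert)
    ultimately show ?case unfolding T'_def by auto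
  qed
  (* claim (b) *)
  have L0: "0 \<le> L"
  proof -
    have "L = (real q ^ (m2 - t + 1) - 1) / (real q - 1)" unfolding L_def gauss_binom_def by simp
    moreover have "1 \<le> real q ^ (m2 - t + 1)" using q2 by (intro one_le_power) simp
    moreover have "1 \<le> real q" using q2 by simp
    ultimately show ?thesis by simp
  qed
  have img_le: "real (card ((\<lambda>v. vec.span (insert v T)) ` (Csel T - {0}))) \<le> L" for T
    using Csel_cases[of T]
  proof
    assume "good T (Csel T)"
    then have "vec.subspace (Csel T)" "vec.dim (Csel T) = m2 - t + 1" unfolding good_def by auto
    then show ?thesis using lines_le[of "Csel T" T] unfolding L_def q_def by simp
  next
    assume "Csel T = {0}"
    then show ?thesis using L0 by simp
  qed
  have claimB: "real (card (Tf i)) \<le> gauss_binom q tF t * L ^ i" for i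
  proof (induction i)
    case 0
    show ?case unfolding Tf0 T0_def q_def using card_subspaces_le[OF Xsub, of t] X(2) tFt by simp
  next
    case (Suc i)
    have "card (Tf (Suc i)) \<le> (\<Sum>T\<in>Tf i. card ((\<lambda>v. vec.span (insert v T)) ` (Csel T - {0})))"
      unfolding TfS step_def by (rule card_UN_le) simp
    then have "real (card (Tf (Suc i))) \<le> real (\<Sum>T\<in>Tf i. card ((\<lambda>v. vec.span (insert v T)) ` (Csel T - {0})))"
      by (simp only: of_nat_le_iff)
    also have "\<dots> = (\<Sum>T\<in>Tf i. real (card ((\<lambda>v. vec.span (insert v T)) ` (Csel T - {0}))))"
      by (rule of_nat_sum)
    also have "\<dots> \<le> (\<Sum>T\<in>Tf i. L)" by (rule sum_mono) (rule img_le)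
    also have "\<dots> = real (card (Tf i)) * L" by simp
    also have "\<dots> \<le> gauss_binom q tF t * L ^ i * L" by (rule mult_right_mono[OF Suc.IH L0])
    finally show ?case by (simp add: ac_simps)
  qed
  (* final *)
  define k where "k = s - t"
  define Np where "Np = Nprime q s m1 \<nu>"
  define TT where "TT = {T\<in>Tf k. tot_iso f T \<and> vec.dim T = s}"
  have cover: "F \<subseteq> (\<Union>T\<in>TT. {F'\<in>Pm f m1. T \<subseteq> F'})"
  proof
    fix A assume A: "A \<in> F"
    obtain T where T: "T \<in> Tf k" "T \<subseteq> A" "vec.subspace T" "vec.dim T = t + k"
      using claimA[OF A, of k] k_def by auto
    have "tot_iso f T" using T(2,3) Fprop[OF A] unfolding tot_iso_def by blast
    then have "T \<in> TT" unfolding TT_def using T st k_def by auto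
    then show "A \<in> (\<Union>T\<in>TT. {F'\<in>Pm f m1. T \<subseteq> F'})" using T(2) A FP by blast
  qed
  have ext: "real (card {F'\<in>Pm f m1. T \<subseteq> F'}) \<le> Np" if "T \<in> TT" for T
    using card_iso_ext_le[OF bf nd dim, of T s m1] that sLe m1(2) unfolding TT_def Np_def q_def by auto
  have "card F \<le> card (\<Union>T\<in>TT. {F'\<in>Pm f m1. T \<subseteq> F'})" by (rule card_mono[OF _ cover]) simp
  also have "\<dots> \<le> (\<Sum>T\<in>TT. card {F'\<in>Pm f m1. T \<subseteq> F'})" by (rule card_UN_le) simp
  finally have "real (card F) \<le> real (\<Sum>T\<in>TT. card {F'\<in>Pm f m1. T \<subseteq> F'})"
    by (simp only: of_nat_le_iff)
  also have "\<dots> = (\<Sum>T\<in>TT. real (card {F'\<in>Pm f m1. T \<subseteq> F'}))" by (rule of_nat_sum)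
  also have "\<dots> \<le> (\<Sum>T\<in>TT. Np)" by (rule sum_mono) (rule ext)
  also have "\<dots> = real (card TT) * Np" by simp
  also have "\<dots> \<le> real (card (Tf k)) * Np"
  proof (rule mult_right_mono)
    show "real (card TT) \<le> real (card (Tf k))" unfolding TT_def by (simp add: card_mono)
    obtain T where "T \<in> TT" using cover F0 by blast
    then show "0 \<le> Np" using ext[of T] by linarith
  qed
  also have "\<dots> \<le> gauss_binom q tF t * L ^ k * Np"
  proof (rule mult_right_mono[OF claimB])
    obtain T where "T \<in> TT" using cover F0 by blast
    then show "0 \<le> Np" using ext[of T] by linarith
  qed
  finally show ?thesis unfolding q_def tF_def L_def k_def s_def Np_def .
qed

end
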